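(* Let $\gamma\in C(\mathbb{R}_+)$. Assume there exist solutions $u^\pm\in C(\mathbb{R}_+,H^2(\mathbb{R}_+))$ of the boundary-value problems $$u^\pm_t=(1\pm\gamma(t))u^\pm_y+u^\pm_{yy}+\gamma(t)e^{-y},\ y>0;\qquad u^\pm(t,0)=0;\qquad u^\pm(t,y)\to0\text{ as } y\to\infty,$$ with initial conditions $u^\pm(0,y)=u^\pm_0(y)$, which in addition satisfy the continuity condition $u^+_y(t,0^+)=-u^-_y(t,0^+)$. Then for every $t>0$, $$\|u^+(t,\cdot)\|^2_{H^1}+\|u^-(t,\cdot)\|^2_{H^1}\le\|u^+_0\|^2_{H^1}+\|u^-_0\|^2_{H^1}.$$
   Context: $\mathbb{R}_+=(0,\infty)$; all norms are on $\mathbb{R}_+$. *)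

theory Defs
  imports "HOL-Analysis.Analysis"
begin

text \<open>All spaces are on the half-line R+ = (0,infinity). Functions of y are
  real-valued; only their values on (0,infinity) matter.\<close>

definition L2_pos :: "(real \<Rightarrow> real) \<Rightarrow> bool" where
  "L2_pos f \<longleftrightarrow> set_borel_measurable lborel {0<..} f \<and>
                  set_integrable lborel {0<..} (\<lambda>y. (f y)\<^sup>2)"

definition L2_norm_sq :: "(real \<Rightarrow> real) \<Rightarrow> real" where
  "L2_norm_sq f = (LINT y:{0<..}|lborel. (f y)\<^sup>2)"

text \<open>H^1 norm squared: the derivative of an H^1 function (absolutely continuous
  representative) exists a.e. and coincides a.e. with the weak derivative.\<close>
definition H1_norm_sq :: "(real \<Rightarrow> real) \<Rightarrow> real" where
  "H1_norm_sq f = L2_norm_sq f + L2_norm_sq (deriv f)"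

definition H2_norm_sq :: "(real \<Rightarrow> real) \<Rightarrow> real" where
  "H2_norm_sq f = L2_norm_sq f + L2_norm_sq (deriv f) + L2_norm_sq (deriv (deriv f))"

definition H2_pos :: "(real \<Rightarrow> real) \<Rightarrow> bool" where
  "H2_pos f \<longleftrightarrow> (\<forall>y>0. f differentiable (at y)) \<and> L2_pos f \<and> L2_pos (deriv f) \<and>
     (\<exists>f2. L2_pos f2 \<and>
        (\<forall>a b. 0 < a \<longrightarrow> a \<le> b \<longrightarrow> (f2 has_integral (deriv f b - deriv f a)) {a..b}))"

text \<open>Strong solution u in C([0,infinity), H^2(R+)), differentiable on (0,infinity) as
  an L^2-valued map, of
  u_t = (1 + sigma gamma(t)) u_y + u_yy + gamma(t) e^{-y}  (y > 0),
  u(t,0) = 0, u(t,y) \<rightarrow> 0 as y \<rightarrow> infinity, u(0,y) = u0(y).\<close>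
definition bvp_solution ::
  "(real \<Rightarrow> real) \<Rightarrow> real \<Rightarrow> (real \<Rightarrow> real \<Rightarrow> real) \<Rightarrow> (real \<Rightarrow> real) \<Rightarrow> bool" where
  "bvp_solution \<gamma> \<sigma> u u0 \<longleftrightarrow>
     (\<forall>t\<ge>0. H2_pos (u t)) \<and>
     (\<forall>t\<ge>0. ((\<lambda>s. H2_norm_sq (\<lambda>y. u s y - u t y)) \<longlongrightarrow> 0) (at t within {0..})) \<and>
     (\<forall>t>0. \<exists>v. L2_pos v \<and>
        ((\<lambda>s. L2_norm_sq (\<lambda>y. (u s y - u t y) / (s - t) - v y)) \<longlongrightarrow> 0) (at t) \<and>
        (AE y in lborel. y > 0 \<longrightarrow>
           v y = (1 + \<sigma> * \<gamma> t) * deriv (u t) y + deriv (deriv (u t)) y + \<gamma> t * exp (- y))) \<and>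
     (\<forall>t>0. (u t \<longlongrightarrow> 0) (at_right 0)) \<and>
     (\<forall>t>0. (u t \<longlongrightarrow> 0) at_top) \<and>
     (\<forall>y>0. u 0 y = u0 y)"

end

theory Submission
  imports Defs
begin


abbreviation M0 :: "real measure" where "M0 \<equiv> restrict_space lborel {0<..}"

lemma sets_pos: "{0<..} \<inter> space lborel \<in> sets (lborel::real measure)" by simp

lemma L2_pos_iff: "L2_pos f \<longleftrightarrow> f \<in> borel_measurable M0 \<and> integrable M0 (\<lambda>y. (f y)\<^sup>2)"
  unfolding L2_pos_def set_borel_measurable_def
  by (simp add: borel_measurable_restrict_space_iff set_integrable_eq)

lemma LINT_M0: "(LINT y:{0<..}|lborel. h y) = integral\<^sup>L M0 (h::real\<Rightarrow>real)"
  unfolding set_lebesgue_integral_def by (rule integral_restrict_space[OF sets_pos, symmetric])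

lemma L2_norm_sq_M0: "L2_norm_sq f = integral\<^sup>L M0 (\<lambda>y. (f y)\<^sup>2)"
  unfolding L2_norm_sq_def LINT_M0 ..

lemma L2_norm_sq_nonneg: "0 \<le> L2_norm_sq f"
  unfolding L2_norm_sq_M0 by (rule integral_nonneg_AE) auto

lemma L2_mult: assumes "L2_pos f" "L2_pos g" shows "integrable M0 (\<lambda>y. f y * g y)"
proof (rule Bochner_Integration.integrable_bound)
  show "integrable M0 (\<lambda>y. (f y)\<^sup>2 + (g y)\<^sup>2)" using assms by (auto simp: L2_pos_iff)
  show "(\<lambda>y. f y * g y) \<in> borel_measurable M0" using assms by (auto simp: L2_pos_iff)
  show "AE x in M0. norm (f x * g x) \<le> norm ((f x)\<^sup>2 + (g x)\<^sup>2)"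
  proof (rule AE_I2)
    fix x
    have "2 * \<bar>f x * g x\<bar> \<le> (f x)\<^sup>2 + (g x)\<^sup>2"
      using sum_squares_bound[of "\<bar>f x\<bar>" "\<bar>g x\<bar>"] by (simp add: abs_mult)
    then show "norm (f x * g x) \<le> norm ((f x)\<^sup>2 + (g x)\<^sup>2)" by simp
  qed
qed

lemma L2_lin: assumes "L2_pos f" "L2_pos g" shows "L2_pos (\<lambda>y. a * f y + b * g y)"
  unfolding L2_pos_iff
proof
  show "(\<lambda>y. a * f y + b * g y) \<in> borel_measurable M0" using assms by (auto simp: L2_pos_iff)
  have i: "integrable M0 (\<lambda>y. a\<^sup>2 * (f y)\<^sup>2 + b\<^sup>2 * (g y)\<^sup>2 + 2 * a * b * (f y * g y))"
    using assms L2_mult[OF assms] by (auto simp: L2_pos_iff)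
  show "integrable M0 (\<lambda>y. (a * f y + b * g y)\<^sup>2)"
    by (rule Bochner_Integration.integrable_cong[THEN iffD1, OF refl _ i]) (simp add: power2_eq_square algebra_simps)
qed

lemma L2_add: "L2_pos f \<Longrightarrow> L2_pos g \<Longrightarrow> L2_pos (\<lambda>y. f y + g y)"
  using L2_lin[of f g 1 1] by simp
lemma L2_diff: "L2_pos f \<Longrightarrow> L2_pos g \<Longrightarrow> L2_pos (\<lambda>y. f y - g y)"
  using L2_lin[of f g 1 "-1"] by simp
lemma L2_cmult: "L2_pos f \<Longrightarrow> L2_pos (\<lambda>y. a * f y)"
  using L2_lin[of f f a 0] by simp
lemma L2_div: "L2_pos f \<Longrightarrow> L2_pos (\<lambda>y. f y / a)"
  using L2_lin[of f f "1/a" 0] by simp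

lemma L2_zero: "L2_pos (\<lambda>y. 0)" unfolding L2_pos_iff by simp

lemma L2_cong: assumes "L2_pos f" "\<And>y. y > 0 \<Longrightarrow> f y = g y" shows "L2_pos g"
proof -
  have m: "g \<in> borel_measurable M0"
    by (rule measurable_cong[THEN iffD1, of _ f]) (use assms in \<open>auto simp: space_restrict_space L2_pos_iff\<close>)
  have i: "integrable M0 (\<lambda>y. (g y)\<^sup>2)"
    by (rule Bochner_Integration.integrable_cong[THEN iffD1, OF refl, of _ "\<lambda>y. (f y)\<^sup>2"]) (use assms in \<open>auto simp: space_restrict_space L2_pos_iff\<close>)
  show ?thesis using m i by (simp add: L2_pos_iff)
qed

lemma M0_integral_cong: assumes "\<And>y. y > 0 \<Longrightarrow> f y = g y" shows "integral\<^sup>L M0 f = integral\<^sup>L M0 g"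
  by (rule Bochner_Integration.integral_cong) (auto simp: space_restrict_space assms)

lemma L2_norm_sq_cong: assumes "\<And>y. y > 0 \<Longrightarrow> f y = g y" shows "L2_norm_sq f = L2_norm_sq g"
  unfolding L2_norm_sq_M0 by (rule M0_integral_cong) (simp add: assms)

lemma real_CS_aux:
  fixes A B C :: real
  assumes "A \<ge> 0" "B \<ge> 0" "\<And>l. l > 0 \<Longrightarrow> 2 * \<bar>C\<bar> \<le> l * A + B / l"
  shows "\<bar>C\<bar> \<le> sqrt A * sqrt B"
proof (cases "A > 0 \<and> B > 0")
  case True
  let ?l = "sqrt B / sqrt A"
  have "2 * \<bar>C\<bar> \<le> ?l * A + B / ?l" using assms(3)[of ?l] True by simp
  also have "?l * A = sqrt B * (A / sqrt A)" by simp
  also have "A / sqrt A = sqrt A" using assms(1) by (rule real_div_sqrt)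
  also have "B / ?l = sqrt A * (B / sqrt B)" by simp
  also have "B / sqrt B = sqrt B" using assms(2) by (rule real_div_sqrt)
  finally show ?thesis by simp
next
  case False
  show ?thesis
  proof (rule ccontr)
    assume c: "\<not> ?thesis"
    then have C0: "\<bar>C\<bar> > 0" by (smt (verit) assms real_sqrt_ge_zero mult_nonneg_nonneg)
    from False have "A = 0 \<or> B = 0" using assms by auto
    then show False
    proof
      assume A0: "A = 0"
      have "2 * \<bar>C\<bar> \<le> B / ((B + 1) / \<bar>C\<bar>)" using assms(3)[of "(B+1)/\<bar>C\<bar>"] A0 C0 assms(2) by simp
      also have "\<dots> = B * \<bar>C\<bar> / (B + 1)" by simp
      also have "\<dots> < \<bar>C\<bar>" using C0 assms(2) by (simp add: divide_less_eq)
      finally show False using C0 by simp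
    next
      assume B0: "B = 0"
      have "2 * \<bar>C\<bar> \<le> (\<bar>C\<bar> / (A + 1)) * A" using assms(3)[of "\<bar>C\<bar>/(A+1)"] B0 C0 assms(1) by simp
      also have "\<dots> < \<bar>C\<bar>" using C0 assms(1) by (simp add: divide_less_eq)
      finally show False using C0 by simp
    qed
  qed
qed

lemma L2_CS: assumes "L2_pos f" "L2_pos g"
  shows "\<bar>integral\<^sup>L M0 (\<lambda>y. f y * g y)\<bar> \<le> sqrt (L2_norm_sq f) * sqrt (L2_norm_sq g)"
proof (rule real_CS_aux)
  show "0 \<le> L2_norm_sq f" "0 \<le> L2_norm_sq g" by (rule L2_norm_sq_nonneg)+
  fix l :: real assume l: "l > 0"
  have ff: "integrable M0 (\<lambda>y. (f y)\<^sup>2)" "integrable M0 (\<lambda>y. (g y)\<^sup>2)" using assms by (auto simp: L2_pos_iff)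
  have fg: "integrable M0 (\<lambda>y. f y * g y)" by (rule L2_mult[OF assms])
  have pw: "2 * \<bar>f y * g y\<bar> \<le> l * (f y)\<^sup>2 + (g y)\<^sup>2 / l" for y
  proof -
    have "0 \<le> (l * \<bar>f y\<bar> - \<bar>g y\<bar>)\<^sup>2" by simp
    then have "2 * l * \<bar>f y * g y\<bar> \<le> l\<^sup>2 * (f y)\<^sup>2 + (g y)\<^sup>2"
      by (simp add: power2_eq_square algebra_simps abs_mult)
    then have "2 * \<bar>f y * g y\<bar> \<le> (l\<^sup>2 * (f y)\<^sup>2 + (g y)\<^sup>2) / l" using l by (simp add: le_divide_eq algebra_simps)
    also have "\<dots> = l * (f y)\<^sup>2 + (g y)\<^sup>2 / l" using l by (simp add: power2_eq_square field_simps)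
    finally show ?thesis .
  qed
  have "2 * \<bar>integral\<^sup>L M0 (\<lambda>y. f y * g y)\<bar> \<le> 2 * integral\<^sup>L M0 (\<lambda>y. \<bar>f y * g y\<bar>)"
    using integral_abs_bound[of M0 "\<lambda>y. f y * g y"] by simp
  also have "\<dots> = integral\<^sup>L M0 (\<lambda>y. 2 * \<bar>f y * g y\<bar>)" by simp
  also have "\<dots> \<le> integral\<^sup>L M0 (\<lambda>y. l * (f y)\<^sup>2 + (g y)\<^sup>2 / l)"
    by (rule integral_mono) (use ff fg pw in auto)
  also have "\<dots> = l * L2_norm_sq f + L2_norm_sq g / l"
    unfolding L2_norm_sq_M0 using ff by simp
  finally show "2 * \<bar>integral\<^sup>L M0 (\<lambda>y. f y * g y)\<bar> \<le> l * L2_norm_sq f + L2_norm_sq g / l" .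
qed



lemma ibp_ac:
  fixes P Q G g :: "real \<Rightarrow> real"
  assumes ab: "a \<le> b"
  and PQ: "\<And>x. a \<le> x \<Longrightarrow> x \<le> b \<Longrightarrow> (Q has_integral (P x - P a)) {a..x}"
  and Gg: "\<And>x. a \<le> x \<Longrightarrow> x \<le> b \<Longrightarrow> (g has_integral (G x - G a)) {a..x}"
  and Qi: "set_integrable lborel {a..b} Q" and gi: "set_integrable lborel {a..b} g"
  shows "((\<lambda>x. P x * g x + Q x * G x) has_integral (P b * G b - P a * G a)) {a..b}"
proof -

  define Qa where "Qa x = indicator {a..b} x * Q x" for x
  define ga where "ga x = indicator {a..b} x * g x" for x
  have Qai: "integrable lborel Qa" using Qi unfolding set_integrable_def Qa_def by simp
  have gai: "integrable lborel ga" using gi unfolding set_integrable_def ga_def by simp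
  have [measurable]: "Qa \<in> borel_measurable lborel" "ga \<in> borel_measurable lborel"
    using Qai gai by auto
  have prodi: "integrable (lborel \<Otimes>\<^sub>M lborel) (\<lambda>(x,y). Qa x * ga y)"
  proof (rule lborel_pair.Fubini_integrable)
    show "(\<lambda>(x,y). Qa x * ga y) \<in> borel_measurable (lborel \<Otimes>\<^sub>M lborel)" by measurable
    have "(\<lambda>x. \<integral>y. norm (case (x, y) of (x, y) \<Rightarrow> Qa x * ga y) \<partial>lborel) = (\<lambda>x. \<bar>Qa x\<bar> * (\<integral>y. \<bar>ga y\<bar> \<partial>lborel))"
      by (simp add: abs_mult)
    moreover have "integrable lborel (\<lambda>x. \<bar>Qa x\<bar> * (\<integral>y. \<bar>ga y\<bar> \<partial>lborel))"
      using Qai by (intro integrable_mult_left integrable_abs)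
    ultimately show "integrable lborel (\<lambda>x. \<integral>y. norm (case (x, y) of (x, y) \<Rightarrow> Qa x * ga y) \<partial>lborel)"
      by simp
    show "AE x in lborel. integrable lborel (\<lambda>y. case (x, y) of (x, y) \<Rightarrow> Qa x * ga y)"
      using gai by (auto intro!: integrable_mult_right)
  qed
  define f where "f x y = (if y \<le> x then Qa x * ga y else 0)" for x y
  have fi: "integrable (lborel \<Otimes>\<^sub>M lborel) (case_prod f)"
  proof (rule Bochner_Integration.integrable_bound[OF prodi])
    show "case_prod f \<in> borel_measurable (lborel \<Otimes>\<^sub>M lborel)"
      unfolding f_def by measurable
    show "AE x in lborel \<Otimes>\<^sub>M lborel. norm (case_prod f x) \<le> norm (case x of (x, y) \<Rightarrow> Qa x * ga y)"
      by (rule AE_I2) (auto simp: f_def)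
  qed
  have Qint: "Q integrable_on {a..b}" using set_borel_integral_eq_integral(1)[OF Qi] .
  have gsub: "set_integrable lborel {a..x} g" if "x \<le> b" for x
    by (rule set_integrable_subset[OF gi]) (use that in auto)
  have Qsub: "set_integrable lborel {x..b} Q" if "a \<le> x" for x
    by (rule set_integrable_subset[OF Qi]) (use that in auto)
  have inner1: "(\<integral>y. f x y \<partial>lborel) = Qa x * (G x - G a)" for x
  proof (cases "a \<le> x \<and> x \<le> b")
    case True
    have "(\<integral>y. f x y \<partial>lborel) = Qa x * (\<integral>y. indicator {a..x} y * g y \<partial>lborel)"
    proof -
      have "(\<lambda>y. f x y) = (\<lambda>y. Qa x * (indicator {a..x} y * g y))"
        using True by (auto simp: f_def ga_def indicator_def fun_eq_iff)
      then show ?thesis by simp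
    qed
    also have "(\<integral>y. indicator {a..x} y * g y \<partial>lborel) = integral {a..x} g"
      using set_borel_integral_eq_integral(2)[OF gsub[of x]] True
      by (simp add: set_lebesgue_integral_def)
    also have "integral {a..x} g = G x - G a" using Gg[of x] True by (simp add: integral_unique)
    finally show ?thesis .
  next
    case False
    then have "(\<lambda>y. f x y) = (\<lambda>y. 0)" by (auto simp: f_def Qa_def fun_eq_iff)
    then show ?thesis using False by (simp add: Qa_def)
  qed
  have inner2: "(\<integral>x. f x y \<partial>lborel) = ga y * (P b - P y)" for y
  proof (cases "a \<le> y \<and> y \<le> b")
    case True
    have "(\<integral>x. f x y \<partial>lborel) = ga y * (\<integral>x. indicator {y..b} x * Q x \<partial>lborel)"
    proof -
      have "(\<lambda>x. f x y) = (\<lambda>x. ga y * (indicator {y..b} x * Q x))"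
        using True by (auto simp: f_def Qa_def indicator_def fun_eq_iff)
      then show ?thesis by simp
    qed
    also have "(\<integral>x. indicator {y..b} x * Q x \<partial>lborel) = integral {y..b} Q"
      using set_borel_integral_eq_integral(2)[OF Qsub[of y]] True
      by (simp add: set_lebesgue_integral_def)
    also have "integral {y..b} Q = integral {a..b} Q - integral {a..y} Q"
      using Henstock_Kurzweil_Integration.integral_combine[of a y b Q] Qint True by simp
    also have "\<dots> = P b - P y" using PQ[of b] PQ[of y] True ab by (simp add: integral_unique)
    finally show ?thesis .
  next
    case False
    then have "(\<lambda>x. f x y) = (\<lambda>x. 0)" by (auto simp: f_def ga_def fun_eq_iff)
    then show ?thesis using False by (simp add: ga_def)
  qed
  have i1: "integrable lborel (\<lambda>x. Qa x * (G x - G a))"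
    using lborel_pair.integrable_fst[OF fi] by (simp add: inner1)
  have i2: "integrable lborel (\<lambda>y. ga y * (P b - P y))"
    using lborel_pair.integrable_snd[OF fi] by (simp add: inner2)
  have eq: "(\<integral>x. Qa x * (G x - G a) \<partial>lborel) = (\<integral>y. ga y * (P b - P y) \<partial>lborel)"
    using lborel_pair.Fubini_integral[OF fi] by (simp add: inner1 inner2)
  have iQG: "integrable lborel (\<lambda>x. Qa x * G x)"
  proof -
    have "integrable lborel (\<lambda>x. Qa x * (G x - G a) + G a * Qa x)" using i1 Qai by auto
    then show ?thesis by (simp add: algebra_simps)
  qed
  have igP: "integrable lborel (\<lambda>x. ga x * P x)"
  proof -
    have "integrable lborel (\<lambda>x. P b * ga x - ga x * (P b - P x))" using i2 gai by auto
    then show ?thesis by (simp add: algebra_simps)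
  qed
  have intQ: "(\<integral>x. Qa x \<partial>lborel) = P b - P a"
    using set_borel_integral_eq_integral(2)[OF Qi] PQ[of b] ab
    by (simp add: set_lebesgue_integral_def Qa_def integral_unique)
  have intg: "(\<integral>x. ga x \<partial>lborel) = G b - G a"
    using set_borel_integral_eq_integral(2)[OF gi] Gg[of b] ab
    by (simp add: set_lebesgue_integral_def ga_def integral_unique)
  have e1: "(\<integral>x. Qa x * (G x - G a) \<partial>lborel) = (\<integral>x. Qa x * G x \<partial>lborel) - G a * (P b - P a)"
  proof -
    have "(\<integral>x. Qa x * (G x - G a) \<partial>lborel) = (\<integral>x. Qa x * G x - G a * Qa x \<partial>lborel)"
      by (simp add: algebra_simps)
    also have "\<dots> = (\<integral>x. Qa x * G x \<partial>lborel) - G a * (\<integral>x. Qa x \<partial>lborel)"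
      using iQG Qai by simp
    finally show ?thesis using intQ by simp
  qed
  have e2: "(\<integral>y. ga y * (P b - P y) \<partial>lborel) = P b * (G b - G a) - (\<integral>x. ga x * P x \<partial>lborel)"
  proof -
    have "(\<integral>y. ga y * (P b - P y) \<partial>lborel) = (\<integral>x. P b * ga x - ga x * P x \<partial>lborel)"
      by (simp add: algebra_simps)
    also have "\<dots> = P b * (\<integral>x. ga x \<partial>lborel) - (\<integral>x. ga x * P x \<partial>lborel)"
      using igP gai by simp
    finally show ?thesis using intg by simp
  qed
  have tot: "(\<integral>x. ga x * P x + Qa x * G x \<partial>lborel) = P b * G b - P a * G a"
  proof -
    have "(\<integral>x. ga x * P x + Qa x * G x \<partial>lborel) = (\<integral>x. ga x * P x \<partial>lborel) + (\<integral>x. Qa x * G x \<partial>lborel)"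
      using igP iQG by simp
    also have "\<dots> = P b * G b - P a * G a" using eq e1 e2 by (simp add: algebra_simps)
    finally show ?thesis .
  qed
  have si: "set_integrable lborel {a..b} (\<lambda>x. P x * g x + Q x * G x)"
  proof -
    have "integrable lborel (\<lambda>x. ga x * P x + Qa x * G x)" using igP iQG by auto
    then show ?thesis unfolding set_integrable_def
      by (rule Bochner_Integration.integrable_cong[THEN iffD1, rotated 2])
         (auto simp: ga_def Qa_def indicator_def algebra_simps)
  qed
  have "set_lebesgue_integral lborel {a..b} (\<lambda>x. P x * g x + Q x * G x) = P b * G b - P a * G a"
  proof -
    have "set_lebesgue_integral lborel {a..b} (\<lambda>x. P x * g x + Q x * G x) = (\<integral>x. ga x * P x + Qa x * G x \<partial>lborel)"
      unfolding set_lebesgue_integral_def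
      by (rule Bochner_Integration.integral_cong) (auto simp: ga_def Qa_def indicator_def algebra_simps)
    then show ?thesis using tot by simp
  qed
  then show ?thesis
    using set_borel_integral_eq_integral[OF si] by (metis has_integral_integrable_integral)
qed



lemma L2_local: assumes "L2_pos Q" "0 < x" shows "set_integrable lborel {x..y} Q"
proof -
  have m: "(\<lambda>z. indicator {0<..} z * Q z) \<in> borel_measurable lborel"
    using assms(1) unfolding L2_pos_def set_borel_measurable_def by simp
  have sq: "integrable lborel (\<lambda>z. indicator {0<..} z * (Q z)\<^sup>2)"
    using assms(1) unfolding L2_pos_def set_integrable_def by simp
  have ind: "integrable lborel (\<lambda>z. indicator {x..y} z :: real)"
    using borel_integrable_atLeastAtMost[of x y "\<lambda>_. 1::real"] by simp
  show ?thesis unfolding set_integrable_def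
  proof (rule Bochner_Integration.integrable_bound)
    show "integrable lborel (\<lambda>z. indicator {0<..} z * (Q z)\<^sup>2 + indicator {x..y} z)"
      using sq ind by auto
    have "(\<lambda>z. indicator {x..y} z * (indicator {0<..} z * Q z)) \<in> borel_measurable lborel"
      using m by measurable
    moreover have "(\<lambda>z. indicator {x..y} z * (indicator {0<..} z * Q z)) = (\<lambda>z. indicator {x..y} z *\<^sub>R Q z)"
      using assms(2) by (auto simp: indicator_def fun_eq_iff)
    ultimately show "(\<lambda>z. indicator {x..y} z *\<^sub>R Q z) \<in> borel_measurable lborel" by simp
    show "AE z in lborel. norm (indicator {x..y} z *\<^sub>R Q z) \<le> norm (indicator {0<..} z * (Q z)\<^sup>2 + indicator {x..y} z)"
    proof (rule AE_I2)
      fix z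
      have "\<bar>Q z\<bar> \<le> (Q z)\<^sup>2 + 1"
      proof (cases "\<bar>Q z\<bar> \<le> 1")
        case True then show ?thesis by (smt (verit) zero_le_power2)
      next
        case False
        then have "\<bar>Q z\<bar> * 1 \<le> \<bar>Q z\<bar> * \<bar>Q z\<bar>" by (intro mult_left_mono) auto
        then show ?thesis by (simp add: power2_eq_square abs_mult_self_eq)
      qed
      then show "norm (indicator {x..y} z *\<^sub>R Q z) \<le> norm (indicator {0<..} z * (Q z)\<^sup>2 + indicator {x..y} z)"
        using assms(2) by (auto simp: indicator_def)
    qed
  qed
qed

lemma seq_at_right0: "filterlim (\<lambda>n. 1 / real (Suc n)) (at_right 0) sequentially"
proof (rule tendsto_imp_filterlim_at_right)
  show "(\<lambda>n. 1 / real (Suc n)) \<longlonglongrightarrow> 0" using LIMSEQ_inverse_real_of_nat by (simp add: inverse_eq_divide)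
  show "\<forall>\<^sub>F n in sequentially. 1 / real (Suc n) > 0" by simp
qed

lemma seq_at_top: "filterlim (\<lambda>n. real (Suc n)) at_top sequentially"
  by (rule filterlim_compose[OF filterlim_real_sequentially filterlim_Suc])

lemma ibp_half:
  fixes P Q G g :: "real \<Rightarrow> real"
  assumes PQ: "\<And>x y. 0 < x \<Longrightarrow> x \<le> y \<Longrightarrow> (Q has_integral (P y - P x)) {x..y}"
  and Gg: "\<And>x y. 0 < x \<Longrightarrow> x \<le> y \<Longrightarrow> (g has_integral (G y - G x)) {x..y}"
  and Ql: "\<And>x y. 0 < x \<Longrightarrow> set_integrable lborel {x..y} Q"
  and gl: "\<And>x y. 0 < x \<Longrightarrow> set_integrable lborel {x..y} g"
  and hi: "integrable M0 (\<lambda>y. P y * g y + Q y * G y)"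
  and A: "((\<lambda>y. P y * G y) \<longlongrightarrow> A) (at_right 0)"
  and B: "((\<lambda>y. P y * G y) \<longlongrightarrow> B) at_top"
  shows "integral\<^sup>L M0 (\<lambda>y. P y * g y + Q y * G y) = B - A"
proof -
  define h where "h y = P y * g y + Q y * G y" for y
  have HK: "(h has_integral (P y * G y - P x * G x)) {x..y}" if "0 < x" "x \<le> y" for x y
    unfolding h_def
    by (rule ibp_ac[OF that(2)]) (use that in \<open>auto intro: PQ Gg Ql gl\<close>)
  have hi': "integrable M0 h" using hi unfolding h_def .
  have hsi: "set_integrable lborel {0<..} h" using hi' by (simp add: set_integrable_eq[OF sets_pos])
  define s where "s n y = indicator {1 / real (Suc n)..real (Suc n)} y * h y" for n y
  have lim1: "(\<lambda>n. integral\<^sup>L M0 (s n)) \<longlonglongrightarrow> integral\<^sup>L M0 h"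
  proof (rule integral_dominated_convergence[where w="\<lambda>y. \<bar>h y\<bar>"])
    show "h \<in> borel_measurable M0" using hi' by auto
    show "s n \<in> borel_measurable M0" for n
    proof -
      have i: "(indicator {1 / real (Suc n)..real (Suc n)} :: real \<Rightarrow> real) \<in> borel_measurable M0"
        by (rule measurable_restrict_space1) simp
      have "(\<lambda>y. indicator {1 / real (Suc n)..real (Suc n)} y * h y) \<in> borel_measurable M0"
        using hi' by (intro borel_measurable_times i) auto
      then show ?thesis unfolding s_def .
    qed
    show "integrable M0 (\<lambda>y. \<bar>h y\<bar>)" using hi' by auto
    show "AE y in M0. norm (s n y) \<le> \<bar>h y\<bar>" for n
      by (rule AE_I2) (auto simp: s_def indicator_def)
    show "AE y in M0. (\<lambda>n. s n y) \<longlonglongrightarrow> h y"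
    proof (rule AE_I2)
      fix y assume "y \<in> space M0"
      then have y: "y > 0" by (simp add: space_restrict_space)
      obtain N :: nat where N: "max y (1 / y) < real N" using reals_Archimedean2 by blast
      have "eventually (\<lambda>n. s n y = h y) sequentially"
      proof (rule eventually_sequentiallyI[of N])
        fix n assume "N \<le> n"
        then have n: "max y (1/y) < real (Suc n)" using N by linarith
        then have "y \<le> real (Suc n)" by simp
        moreover have "1 / real (Suc n) \<le> y"
        proof -
          have "1 / y < real (Suc n)" using n by simp
          then have "1 < y * real (Suc n)" using y by (simp add: divide_less_eq mult.commute)
          then show ?thesis using y by (simp add: divide_le_eq mult.commute)
        qed
        ultimately show "s n y = h y" by (simp add: s_def)
      qed
      then show "(\<lambda>n. s n y) \<longlonglongrightarrow> h y" by (rule tendsto_eventually)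
    qed
  qed
  have val: "integral\<^sup>L M0 (s n) = P (real (Suc n)) * G (real (Suc n)) - P (1 / real (Suc n)) * G (1 / real (Suc n))" for n
  proof -
    let ?a = "1 / real (Suc n)" and ?b = "real (Suc n)"
    have ab: "0 < ?a" "?a \<le> ?b"
    proof -
      show "0 < ?a" by simp
      have "?a \<le> 1" by simp
      also have "1 \<le> ?b" by simp
      finally show "?a \<le> ?b" .
    qed
    have sub: "{?a..?b} \<subseteq> {0<..}"
    proof
      fix x assume "x \<in> {?a..?b}"
      then have "?a \<le> x" by (simp del: of_nat_Suc)
      then show "x \<in> {0<..}" using less_le_trans[OF ab(1)] by simp
    qed
    have pos: "0 < 1 / (1 + real n)" by simp
    have si: "set_integrable lborel {?a..?b} h"
      by (rule set_integrable_subset[OF hsi _ sub]) simp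
    have "integral\<^sup>L M0 (s n) = (LINT y|lborel. indicator {0<..} y *\<^sub>R s n y)"
      by (rule integral_restrict_space[OF sets_pos])
    also have "\<dots> = set_lebesgue_integral lborel {?a..?b} h"
      unfolding set_lebesgue_integral_def
      by (rule Bochner_Integration.integral_cong) (auto simp: s_def indicator_def dest: less_le_trans[OF pos])
    also have "\<dots> = integral {?a..?b} h" using set_borel_integral_eq_integral(2)[OF si] .
    also have "\<dots> = P ?b * G ?b - P ?a * G ?a" using HK[OF ab] by (rule integral_unique)
    finally show ?thesis .
  qed
  have lim2: "(\<lambda>n. integral\<^sup>L M0 (s n)) \<longlonglongrightarrow> B - A"
    unfolding val
    by (intro tendsto_diff filterlim_compose[OF B seq_at_top] filterlim_compose[OF A seq_at_right0])
  show ?thesis using LIMSEQ_unique[OF lim1 lim2] unfolding h_def .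
qed



lemma leb_explicit:
  fixes F :: "real \<Rightarrow> real"
  assumes "\<And>c d. F integrable_on {c..d}"
  shows "\<exists>N. negligible N \<and> (\<forall>x e. x \<notin> N \<and> 0 < e \<longrightarrow>
     (\<exists>d>0. \<forall>h. 0 < h \<and> h < d \<longrightarrow> \<bar>integral {x..x+h} F / h - F x\<bar> < e))"
proof -
  obtain N where N: "negligible N"
    "\<And>x e. \<lbrakk>x \<notin> N; 0 < e\<rbrakk> \<Longrightarrow> \<exists>d>0. \<forall>h. 0 < h \<and> h < d \<longrightarrow>
        norm(integral (cbox x (x + h *\<^sub>R One)) F /\<^sub>R h ^ DIM(real) - F x) < e"
    by (rule integrable_ccontinuous_explicit[of F]) (use assms in auto)
  show ?thesis
    by (rule exI[of _ N]) (use N in \<open>auto simp: divide_inverse mult.commute\<close>)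
qed

lemma lebesgue_diff:
  fixes p q :: "real \<Rightarrow> real"
  assumes PQ: "\<And>a b. 0 < a \<Longrightarrow> a \<le> b \<Longrightarrow> (q has_integral (p b - p a)) {a..b}"
  and ql: "\<And>a b. 0 < a \<Longrightarrow> set_integrable lborel {a..b} q"
  shows "AE y in lborel. y > 0 \<longrightarrow> (p has_real_derivative q y) (at y)"
proof -
  define lo where "lo n = 1 / real (Suc n)" for n
  define hi where "hi n = real (Suc n)" for n
  define F where "F n x = indicator {lo n..hi n} x * q x" for n x
  have Fl: "integrable lborel (F n)" for n
    using ql[of "lo n" "hi n"] unfolding F_def lo_def set_integrable_def by simp
  have Fi: "F n integrable_on {c..d}" for n c d
  proof -
    have "set_integrable lborel {c..d} (F n)"
      unfolding set_integrable_def by (rule integrable_mult_indicator[OF _ Fl]) simp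
    then show ?thesis by (rule set_borel_integral_eq_integral(1))
  qed
  have Gi: "(\<lambda>x. F n (-x)) integrable_on {c..d}" for n c d
    using Henstock_Kurzweil_Integration.integrable_reflect_real[of "F n" "-c" "-d"] Fi[of n "-d" "-c"] by simp
  have "\<exists>N. negligible N \<and> (\<forall>x e. x \<notin> N \<and> 0 < e \<longrightarrow>
     (\<exists>d>0. \<forall>h. 0 < h \<and> h < d \<longrightarrow> \<bar>integral {x..x+h} (F n) / h - F n x\<bar> < e))" for n
    by (rule leb_explicit) (rule Fi)
  then obtain NN where NN: "\<And>n. negligible (NN n)"
    "\<And>n x e. x \<notin> NN n \<Longrightarrow> 0 < e \<Longrightarrow>
     (\<exists>d>0. \<forall>h. 0 < h \<and> h < d \<longrightarrow> \<bar>integral {x..x+h} (F n) / h - F n x\<bar> < e)"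
    by metis
  have "\<exists>N. negligible N \<and> (\<forall>x e. x \<notin> N \<and> 0 < e \<longrightarrow>
     (\<exists>d>0. \<forall>h. 0 < h \<and> h < d \<longrightarrow> \<bar>integral {x..x+h} (\<lambda>x. F n (-x)) / h - F n (-x)\<bar> < e))" for n
    using leb_explicit[of "\<lambda>x. F n (-x)"] Gi by simp
  then obtain NN' where NN': "\<And>n. negligible (NN' n)"
    "\<And>n x e. x \<notin> NN' n \<Longrightarrow> 0 < e \<Longrightarrow>
     (\<exists>d>0. \<forall>h. 0 < h \<and> h < d \<longrightarrow> \<bar>integral {x..x+h} (\<lambda>x. F n (-x)) / h - F n (-x)\<bar> < e)"
    by metis
  define NB where "NB = (\<Union>n. NN n \<union> uminus ` NN' n)"
  have negNB: "negligible NB"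
    unfolding NB_def
  proof (rule negligible_countable_Union)
    show "countable (range (\<lambda>n. NN n \<union> uminus ` NN' n))" by simp
    fix S assume "S \<in> range (\<lambda>n. NN n \<union> uminus ` NN' n)"
    then obtain n where S: "S = NN n \<union> uminus ` NN' n" by auto
    have "negligible (uminus ` NN' n :: real set)"
      by (rule negligible_differentiable_image_negligible[OF _ NN'(1)]) (simp_all add: linear_imp_differentiable_on linear_uminus)
    then show "negligible S" using S NN(1) by auto
  qed
  have main: "(p has_real_derivative q y) (at y)" if y: "y > 0" "y \<notin> NB" for y
  proof -
    obtain n :: nat where n: "max y (1 / y) < real n" using reals_Archimedean2 by blast
    have yhi: "y < hi n" using n by (simp add: hi_def)
    have ylo: "lo n < y"
    proof -
      have "1 / y < real (Suc n)" using n by simp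
      then have "1 < y * real (Suc n)" using y by (simp add: divide_less_eq mult.commute)
      then show ?thesis using y by (simp add: lo_def divide_less_eq mult.commute)
    qed
    have lopos: "0 < lo n" by (simp add: lo_def)
    have yN: "y \<notin> NN n" and yN': "-y \<notin> NN' n" using y(2) unfolding NB_def by (auto simp: image_iff)
      (metis minus_minus)
    have Fy: "F n y = q y" using ylo yhi by (simp add: F_def)
    have R: "((\<lambda>h. (p (y + h) - p y) / h) \<longlongrightarrow> q y) (at_right 0)"
      unfolding tendsto_iff
    proof (intro allI impI)
      fix e :: real assume e: "e > 0"
      obtain d where d: "d > 0" "\<And>h. 0 < h \<Longrightarrow> h < d \<Longrightarrow> \<bar>integral {y..y+h} (F n) / h - F n y\<bar> < e"
        using NN(2)[OF yN e] by blast
      show "\<forall>\<^sub>F h in at_right 0. dist ((p (y + h) - p y) / h) (q y) < e"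
        unfolding eventually_at_right_field
      proof (intro exI[of _ "min d (hi n - y)"] conjI allI impI)
        show "0 < min d (hi n - y)" using d yhi by simp
        fix h :: real assume h: "0 < h" "h < min d (hi n - y)"
        have "integral {y..y+h} (F n) = integral {y..y+h} q"
          by (rule integral_cong) (use h ylo in \<open>auto simp: F_def\<close>)
        also have "\<dots> = p (y + h) - p y" using PQ[of y "y+h"] y h by (simp add: integral_unique)
        finally show "dist ((p (y + h) - p y) / h) (q y) < e"
          using d(2)[of h] h Fy by (simp add: dist_real_def)
      qed
    qed
    have L: "((\<lambda>h. (p (y + h) - p y) / h) \<longlongrightarrow> q y) (at_left 0)"
      unfolding tendsto_iff
    proof (intro allI impI)
      fix e :: real assume e: "e > 0"
      obtain d where d: "d > 0" "\<And>h. 0 < h \<Longrightarrow> h < d \<Longrightarrow> \<bar>integral {-y..-y+h} (\<lambda>x. F n (-x)) / h - F n (- (-y))\<bar> < e"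
        using NN'(2)[OF yN' e] by blast
      show "\<forall>\<^sub>F h in at_left 0. dist ((p (y + h) - p y) / h) (q y) < e"
        unfolding eventually_at_left_field
      proof (intro exI[of _ "- min d (y - lo n)"] conjI allI impI)
        show "- min d (y - lo n) < 0" using d ylo by simp
        fix k :: real assume k: "- min d (y - lo n) < k" "k < 0"
        define h where "h = -k"
        have h: "0 < h" "h < min d (y - lo n)" using k by (auto simp: h_def)
        have "integral {-y..-y+h} (\<lambda>x. F n (-x)) = integral {-y..-(y-h)} (\<lambda>x. F n (-x))" by simp
        also have "\<dots> = integral {y-h..y} (F n)" by (rule Henstock_Kurzweil_Integration.integral_reflect_real)
        also have "\<dots> = integral {y-h..y} q"
          by (rule integral_cong) (use h yhi in \<open>auto simp: F_def\<close>)
        also have "\<dots> = p y - p (y - h)" using PQ[of "y-h" y] h lopos by (simp add: integral_unique)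
        finally have eq: "integral {-y..-y+h} (\<lambda>x. F n (-x)) = p y - p (y - h)" .
        have "(p (y + k) - p y) / k = (p y - p (y - h)) / h" by (simp add: h_def divide_simps)
        then show "dist ((p (y + k) - p y) / k) (q y) < e"
          using d(2)[of h] h Fy eq by (simp add: dist_real_def)
      qed
    qed
    show ?thesis unfolding DERIV_def by (rule filterlim_split_at[OF L R])
  qed
  have "AE y in lebesgue. y \<notin> NB"
    using negNB by (intro AE_not_in) (simp add: negligible_iff_null_sets)
  then have "AE y in lborel. y \<notin> NB" by (simp add: AE_completion_iff)
  then show ?thesis by eventually_elim (use main in auto)
qed



lemma L2_exp: "L2_pos (\<lambda>y. exp (- y))"
proof -
  have "(\<lambda>x. exp (- 2 * x) :: real) integrable_on {0..}"
    by (rule integrable_on_exp_minus_to_infinity) simp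
  then have "(\<lambda>x. exp (- 2 * x) :: real) absolutely_integrable_on {0..}"
    by (intro nonnegative_absolutely_integrable_1) auto
  then have "integrable lebesgue (\<lambda>x. indicator {0..} x *\<^sub>R exp (- 2 * x) :: real)"
    by (simp add: set_integrable_def)
  then have "integrable lborel (\<lambda>x. indicator {0..} x *\<^sub>R exp (- 2 * x) :: real)"
    by (subst (asm) integrable_completion) auto
  then have "set_integrable lborel {0..} (\<lambda>x. exp (- 2 * x) :: real)"
    by (simp add: set_integrable_def)
  then have "set_integrable lborel {0<..} (\<lambda>x. exp (- 2 * x) :: real)"
    by (rule set_integrable_subset) auto
  then have "integrable M0 (\<lambda>x. exp (- 2 * x) :: real)"
    by (simp add: set_integrable_eq[OF sets_pos])
  moreover have "(\<lambda>x. exp (- 2 * x)) = (\<lambda>y. (exp (- y))\<^sup>2 :: real)"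
    by (auto simp: fun_eq_iff power2_eq_square exp_add[symmetric])
  ultimately show ?thesis unfolding L2_pos_iff
    by (auto intro!: measurable_restrict_space1)
qed

definition prof :: "(real \<Rightarrow> real) \<Rightarrow> (real \<Rightarrow> real) \<Rightarrow> real \<Rightarrow> bool" where
  "prof f q l \<longleftrightarrow> (\<forall>y>0. (f has_real_derivative deriv f y) (at y)) \<and> L2_pos f \<and> L2_pos (deriv f) \<and>
     L2_pos q \<and> (\<forall>a b. 0 < a \<longrightarrow> a \<le> b \<longrightarrow> (q has_integral (deriv f b - deriv f a)) {a..b}) \<and>
     (f \<longlongrightarrow> 0) (at_right 0) \<and> (f \<longlongrightarrow> 0) at_top \<and> (deriv f \<longlongrightarrow> l) (at_right 0)"

lemma fFTC:
  assumes "\<forall>y>0. (f has_real_derivative p y) (at y)" "0 < x" "x \<le> y"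
  shows "(p has_integral (f y - f x)) {x..y}"
proof (rule fundamental_theorem_of_calculus[OF assms(3)])
  fix z assume "z \<in> {x..y}"
  then have "z > 0" using assms(2) by auto
  then show "(f has_vector_derivative p z) (at z within {x..y})"
    using assms(1) by (auto simp: has_real_derivative_iff_has_vector_derivative intro: has_vector_derivative_at_within)
qed

lemma prof_FTC: "prof f q l \<Longrightarrow> 0 < x \<Longrightarrow> x \<le> y \<Longrightarrow> (deriv f has_integral (f y - f x)) {x..y}"
  unfolding prof_def by (intro fFTC) auto

lemma prof_FTC2: "prof f q l \<Longrightarrow> 0 < x \<Longrightarrow> x \<le> y \<Longrightarrow> (q has_integral (deriv f y - deriv f x)) {x..y}"
  unfolding prof_def by auto

lemma prof_L2: assumes "prof f q l" shows "L2_pos f" "L2_pos (deriv f)" "L2_pos q"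
  using assms unfolding prof_def by auto

lemma prof_lims: assumes "prof f q l"
  shows "(f \<longlongrightarrow> 0) (at_right 0)" "(f \<longlongrightarrow> 0) at_top" "(deriv f \<longlongrightarrow> l) (at_right 0)"
  using assms unfolding prof_def by auto

lemma prof_dd: assumes "prof f q l" shows "AE y in lborel. y > 0 \<longrightarrow> deriv (deriv f) y = q y"
proof -
  have "AE y in lborel. y > 0 \<longrightarrow> (deriv f has_real_derivative q y) (at y)"
    by (rule lebesgue_diff) (use assms in \<open>auto intro: prof_FTC2 L2_local prof_L2\<close>)
  then show ?thesis by eventually_elim (auto intro: DERIV_imp_deriv)
qed

lemma prof_ptop: assumes "prof f q l" shows "(deriv f \<longlongrightarrow> 0) at_top"
proof -
  define p where "p = deriv f"
  have pL: "L2_pos p" "L2_pos q" using prof_L2[OF assms] by (auto simp: p_def)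
  define h where "h x = p x * q x + q x * p x" for x
  have hM: "integrable M0 h" unfolding h_def using L2_mult[OF pL] L2_mult[OF pL(2,1)] by auto
  have hs: "set_integrable lborel {1..} h"
    using hM by (subst (asm) set_integrable_eq[OF sets_pos, symmetric]) (auto elim: set_integrable_subset)
  have HK: "(h has_integral (p b * p b - p 1 * p 1)) {1..b}" if "1 \<le> b" for b
    unfolding h_def
  proof (rule ibp_ac[OF that])
    show "(q has_integral (p x - p 1)) {1..x}" if "1 \<le> x" "x \<le> b" for x
      using prof_FTC2[OF assms, of 1 x] that by (simp add: p_def)
    then show "(q has_integral (p x - p 1)) {1..x}" if "1 \<le> x" "x \<le> b" for x using that .
    show "set_integrable lborel {1..b} q" by (rule L2_local[OF pL(2)]) simp
    then show "set_integrable lborel {1..b} q" .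
  qed
  have lim: "((\<lambda>b. set_lebesgue_integral lborel {1..b} h) \<longlongrightarrow> set_lebesgue_integral lborel {1..} h) at_top"
    by (rule tendsto_set_lebesgue_integral_at_top[OF _ hs]) simp
  define L where "L = p 1 * p 1 + set_lebesgue_integral lborel {1..} h"
  have ev: "eventually (\<lambda>b. p 1 * p 1 + set_lebesgue_integral lborel {1..b} h = (p b)\<^sup>2) at_top"
  proof (rule eventually_at_top_linorderI[of 1])
    fix b :: real assume b: "1 \<le> b"
    have "set_integrable lborel {1..b} h" by (rule set_integrable_subset[OF hs]) auto
    then have "set_lebesgue_integral lborel {1..b} h = integral {1..b} h" by (rule set_borel_integral_eq_integral(2))
    also have "\<dots> = p b * p b - p 1 * p 1" using HK[OF b] by (rule integral_unique)
    finally show "p 1 * p 1 + set_lebesgue_integral lborel {1..b} h = (p b)\<^sup>2" by (simp add: power2_eq_square)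
  qed
  have limsq: "((\<lambda>b. (p b)\<^sup>2) \<longlongrightarrow> L) at_top"
    unfolding L_def by (rule tendsto_cong[THEN iffD1, OF ev]) (intro tendsto_add tendsto_const lim)
  have L0: "L = 0"
  proof (rule ccontr)
    assume "L \<noteq> 0"
    moreover have "L \<ge> 0" by (rule tendsto_lowerbound[OF limsq]) auto
    ultimately have Lpos: "L > 0" by simp
    then have "eventually (\<lambda>b. (p b)\<^sup>2 > L / 2) at_top"
      using limsq by (intro order_tendstoD(1)) auto
    then obtain R where R: "\<And>b. b \<ge> R \<Longrightarrow> (p b)\<^sup>2 > L / 2" by (auto simp: eventually_at_top_linorder)
    define R' where "R' = max R 1"
    have R'pos: "R' > 0" "R' \<ge> R" by (auto simp: R'_def)
    define N where "N = L2_norm_sq p"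
    define b where "b = R' + 2 * (N + 1) / L"
    have bR: "R' \<le> b" using Lpos L2_norm_sq_nonneg[of p] by (simp add: b_def N_def)
    have psq: "set_integrable lborel {0<..} (\<lambda>y. (p y)\<^sup>2)" using pL(1) by (simp add: L2_pos_def)
    have s1: "set_integrable lborel {R'..b} (\<lambda>y. (p y)\<^sup>2)"
      by (rule set_integrable_subset[OF psq]) (use R'pos in auto)
    have "(b - R') * (L / 2) = integral {R'..b} (\<lambda>y. L / 2)" using bR by simp
    also have "\<dots> \<le> integral {R'..b} (\<lambda>y. (p y)\<^sup>2)"
      by (rule integral_le) (use set_borel_integral_eq_integral(1)[OF s1] R R'pos in \<open>auto intro: less_imp_le\<close>)
    also have "\<dots> = set_lebesgue_integral lborel {R'..b} (\<lambda>y. (p y)\<^sup>2)"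
      by (rule set_borel_integral_eq_integral(2)[OF s1, symmetric])
    also have "\<dots> \<le> set_lebesgue_integral lborel {0<..} (\<lambda>y. (p y)\<^sup>2)"
      unfolding set_lebesgue_integral_def
      by (rule integral_mono) (use s1 psq R'pos in \<open>auto simp: set_integrable_def indicator_def\<close>)
    also have "\<dots> = N" by (simp add: N_def L2_norm_sq_def)
    finally have "(b - R') * (L / 2) \<le> N" .
    moreover have "(b - R') * (L / 2) = N + 1" using Lpos by (simp add: b_def)
    ultimately show False by simp
  qed
  have "((\<lambda>b. sqrt ((p b)\<^sup>2)) \<longlongrightarrow> sqrt 0) at_top" using limsq L0 by (intro tendsto_real_sqrt) simp
  then have "((\<lambda>b. \<bar>p b\<bar>) \<longlongrightarrow> 0) at_top" by simp
  then show ?thesis unfolding p_def by (simp add: tendsto_rabs_zero_iff)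
qed



abbreviation ip :: "(real \<Rightarrow> real) \<Rightarrow> (real \<Rightarrow> real) \<Rightarrow> real" where
  "ip f g \<equiv> integral\<^sup>L M0 (\<lambda>y. f y * g y)"

lemma ip_commute: "ip f g = ip g f" by (simp add: mult.commute)

lemma ibp_L2:
  fixes P Q G g :: "real \<Rightarrow> real"
  assumes "\<And>x y. 0 < x \<Longrightarrow> x \<le> y \<Longrightarrow> (Q has_integral (P y - P x)) {x..y}"
    "\<And>x y. 0 < x \<Longrightarrow> x \<le> y \<Longrightarrow> (g has_integral (G y - G x)) {x..y}"
    "L2_pos P" "L2_pos Q" "L2_pos G" "L2_pos g"
    "((\<lambda>y. P y * G y) \<longlongrightarrow> A) (at_right 0)" "((\<lambda>y. P y * G y) \<longlongrightarrow> B) at_top"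
  shows "ip P g + ip Q G = B - A"
proof -
  have i1: "integrable M0 (\<lambda>y. P y * g y)" by (rule L2_mult) (use assms in auto)
  have i2: "integrable M0 (\<lambda>y. Q y * G y)" by (rule L2_mult) (use assms in auto)
  have "integral\<^sup>L M0 (\<lambda>y. P y * g y + Q y * G y) = B - A"
    by (rule ibp_half) (use assms i1 i2 L2_local in auto)
  then show ?thesis using i1 i2 by simp
qed

lemma exp_FTC: fixes x y :: real assumes "0 < x" "x \<le> y" shows "((\<lambda>z. - exp (- z)) has_integral (exp (- y) - exp (- x))) {x..y}"
proof (rule fundamental_theorem_of_calculus[OF assms(2)])
  fix z assume "z \<in> {x..y}"
  have "((\<lambda>z. exp (- z)) has_real_derivative - exp (- z)) (at z)"
    by (auto intro!: derivative_eq_intros)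
  then show "((\<lambda>z. exp (- z)) has_vector_derivative - exp (- z)) (at z within {x..y})"
    by (auto simp: has_real_derivative_iff_has_vector_derivative intro: has_vector_derivative_at_within)
qed

lemma exp_lims: "((\<lambda>z. exp (- z)) \<longlongrightarrow> 1) (at_right (0::real))" "((\<lambda>z. exp (- z)) \<longlongrightarrow> (0::real)) at_top"
proof -
  have "((\<lambda>z. exp (- z)) \<longlongrightarrow> exp (- 0)) (at_right (0::real))"
    by (intro tendsto_intros)
  then show "((\<lambda>z. exp (- z)) \<longlongrightarrow> 1) (at_right (0::real))" by simp
  show "((\<lambda>z. exp (- z)) \<longlongrightarrow> (0::real)) at_top"
    by (rule filterlim_compose[OF exp_at_bot filterlim_uminus_at_bot_at_top])
qed

lemma L2_mexp: "L2_pos (\<lambda>z. - exp (- z))" using L2_cmult[OF L2_exp, of "-1"] by simp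

context
  fixes f q l
  assumes pf: "prof f q l"
begin

lemma I1: "ip f (deriv f) = 0"
proof -
  have "ip f (deriv f) + ip (deriv f) f = 0 - 0"
  proof (rule ibp_L2)
    show "((\<lambda>y. f y * f y) \<longlongrightarrow> 0) (at_right 0)"
      using tendsto_mult[OF prof_lims(1)[OF pf] prof_lims(1)[OF pf]] by simp
    show "((\<lambda>y. f y * f y) \<longlongrightarrow> 0) at_top"
      using tendsto_mult[OF prof_lims(2)[OF pf] prof_lims(2)[OF pf]] by simp
  qed (use pf prof_FTC prof_L2 in auto)
  then show ?thesis by (simp add: mult.commute)
qed

lemma I2: "ip (deriv f) (deriv f) + ip q f = 0"
proof -
  have "ip (deriv f) (deriv f) + ip q f = 0 - 0"
  proof (rule ibp_L2)
    show "((\<lambda>y. deriv f y * f y) \<longlongrightarrow> 0) (at_right 0)"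
      using tendsto_mult[OF prof_lims(3)[OF pf] prof_lims(1)[OF pf]] by simp
    show "((\<lambda>y. deriv f y * f y) \<longlongrightarrow> 0) at_top"
      using tendsto_mult[OF prof_ptop[OF pf] prof_lims(2)[OF pf]] by simp
  qed (use pf prof_FTC prof_FTC2 prof_L2 in auto)
  then show ?thesis by simp
qed

lemma I3: "ip (deriv f) q = - l\<^sup>2 / 2"
proof -
  have "ip (deriv f) q + ip q (deriv f) = 0 - l * l"
  proof (rule ibp_L2)
    show "((\<lambda>y. deriv f y * deriv f y) \<longlongrightarrow> l * l) (at_right 0)"
      using tendsto_mult[OF prof_lims(3)[OF pf] prof_lims(3)[OF pf]] by simp
    show "((\<lambda>y. deriv f y * deriv f y) \<longlongrightarrow> 0) at_top"
      using tendsto_mult[OF prof_ptop[OF pf] prof_ptop[OF pf]] by simp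
  qed (use pf prof_FTC2 prof_L2 in auto)
  then show ?thesis by (simp add: mult.commute power2_eq_square)
qed

lemma I4: "ip q (\<lambda>z. exp (- z)) = ip (deriv f) (\<lambda>z. exp (- z)) - l"
proof -
  have "ip (deriv f) (\<lambda>z. - exp (- z)) + ip q (\<lambda>z. exp (- z)) = 0 - l * 1"
  proof (rule ibp_L2)
    show "((\<lambda>y. deriv f y * exp (- y)) \<longlongrightarrow> l * 1) (at_right 0)"
      by (rule tendsto_mult[OF prof_lims(3)[OF pf] exp_lims(1)])
    show "((\<lambda>y. deriv f y * exp (- y)) \<longlongrightarrow> 0) at_top"
      using tendsto_mult[OF prof_ptop[OF pf] exp_lims(2)] by simp
  qed (use pf prof_FTC2 prof_L2 exp_FTC L2_exp L2_mexp in auto)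
  then show ?thesis by simp
qed

lemma I5: "ip (deriv f) (\<lambda>z. exp (- z)) = ip f (\<lambda>z. exp (- z))"
proof -
  have "ip f (\<lambda>z. - exp (- z)) + ip (deriv f) (\<lambda>z. exp (- z)) = 0 - 0 * 1"
  proof (rule ibp_L2)
    show "((\<lambda>y. f y * exp (- y)) \<longlongrightarrow> 0 * 1) (at_right 0)"
      by (rule tendsto_mult[OF prof_lims(1)[OF pf] exp_lims(1)])
    show "((\<lambda>y. f y * exp (- y)) \<longlongrightarrow> 0) at_top"
      using tendsto_mult[OF prof_lims(2)[OF pf] exp_lims(2)] by simp
  qed (use pf prof_FTC prof_L2 exp_FTC L2_exp L2_mexp in auto)
  then show ?thesis by simp
qed

lemma bdry_bound: "l\<^sup>2 \<le> L2_norm_sq (deriv f) + L2_norm_sq q"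
proof -
  have pL: "L2_pos (deriv f)" "L2_pos q" using prof_L2[OF pf] by auto
  have i: "integrable M0 (\<lambda>y. deriv f y * q y)" by (rule L2_mult[OF pL])
  have i2: "integrable M0 (\<lambda>y. (deriv f y)\<^sup>2)" "integrable M0 (\<lambda>y. (q y)\<^sup>2)" using pL by (auto simp: L2_pos_iff)
  have "l\<^sup>2 = integral\<^sup>L M0 (\<lambda>y. - 2 * (deriv f y * q y))" using I3 by simp
  also have "\<dots> \<le> integral\<^sup>L M0 (\<lambda>y. (deriv f y)\<^sup>2 + (q y)\<^sup>2)"
  proof (rule integral_mono)
    show "integrable M0 (\<lambda>y. - 2 * (deriv f y * q y))" using i by simp
    show "integrable M0 (\<lambda>y. (deriv f y)\<^sup>2 + (q y)\<^sup>2)" using i2 by simp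
    fix y
    show "- 2 * (deriv f y * q y) \<le> (deriv f y)\<^sup>2 + (q y)\<^sup>2"
      using sum_squares_bound[of "deriv f y" "- q y"] by simp
  qed
  also have "\<dots> = L2_norm_sq (deriv f) + L2_norm_sq q" using i2 by (simp add: L2_norm_sq_M0)
  finally show ?thesis .
qed

lemma Dform:
  assumes vL: "L2_pos v"
    and ae: "AE y in lborel. y > 0 \<longrightarrow> v y = a * deriv f y + deriv (deriv f) y + c * exp (- y)"
  shows "ip v (\<lambda>y. f y - q y) = - L2_norm_sq (deriv f) - L2_norm_sq q + a * l\<^sup>2 / 2 + c * l"
proof -
  define p where "p = deriv f"
  define e where "e = (\<lambda>y::real. exp (- y))"
  have L: "L2_pos f" "L2_pos p" "L2_pos q" "L2_pos e" using prof_L2[OF pf] L2_exp by (auto simp: p_def e_def)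
  have ae2: "AE y in lborel. y > 0 \<longrightarrow> v y = a * p y + q y + c * e y"
    using ae prof_dd[OF pf] by eventually_elim (auto simp: p_def e_def)
  then have ae3: "AE y in M0. v y * (f y - q y) =
      a * (p y * f y) - a * (p y * q y) + q y * f y - q y * q y + c * (e y * f y) - c * (e y * q y)"
  proof (subst AE_restrict_space_iff[OF sets_pos])
    show "AE y in lborel. y \<in> {0<..} \<longrightarrow> v y * (f y - q y) =
      a * (p y * f y) - a * (p y * q y) + q y * f y - q y * q y + c * (e y * f y) - c * (e y * q y)"
      using ae2 by eventually_elim (auto simp: algebra_simps)
  qed
  have ipf: "integrable M0 (\<lambda>y. F y * G y)" if "L2_pos F" "L2_pos G" for F G using L2_mult[OF that] .
  have "ip v (\<lambda>y. f y - q y) = integral\<^sup>L M0 (\<lambda>y.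
      a * (p y * f y) - a * (p y * q y) + q y * f y - q y * q y + c * (e y * f y) - c * (e y * q y))"
  proof (rule integral_cong_AE[OF _ _ ae3])
    show "(\<lambda>y. v y * (f y - q y)) \<in> borel_measurable M0"
      using ipf[OF vL L2_diff[OF L(1,3)]] by auto
    show "(\<lambda>y. a * (p y * f y) - a * (p y * q y) + q y * f y - q y * q y + c * (e y * f y) - c * (e y * q y)) \<in> borel_measurable M0"
      using L by (auto simp: L2_pos_iff)
  qed
  also have "\<dots> = a * ip p f - a * ip p q + ip q f - ip q q + c * ip e f - c * ip e q"
  proof (rule has_bochner_integral_integral_eq)
    show "has_bochner_integral M0 (\<lambda>y. a * (p y * f y) - a * (p y * q y) + q y * f y - q y * q y + c * (e y * f y) - c * (e y * q y))
       (a * ip p f - a * ip p q + ip q f - ip q q + c * ip e f - c * ip e q)"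
      by (intro has_bochner_integral_add has_bochner_integral_diff has_bochner_integral_mult_right
          has_bochner_integral_integrable ipf L)
  qed
  also have "ip p f = 0" using I1 ip_commute[of p f] by (simp add: p_def)
  also have "ip q f = - ip p p" using I2 by (simp add: p_def)
  also have "ip p q = - l\<^sup>2 / 2" using I3 by (simp add: p_def)
  also have "ip e q = ip e f - l" using I4 I5 ip_commute[of e q] ip_commute[of e f] by (simp add: p_def e_def)
  also have "ip p p = L2_norm_sq (deriv f)" by (simp add: L2_norm_sq_M0 power2_eq_square p_def)
  also have "ip q q = L2_norm_sq q" by (simp add: L2_norm_sq_M0 power2_eq_square)
  finally show ?thesis by (simp add: algebra_simps)
qed

end

lemma T_ident:
  assumes p1: "prof f1 q1 l1" and p2: "prof f2 q2 l2"
  shows "ip (deriv f1) (\<lambda>y. deriv f1 y - deriv f2 y) + ip q1 (\<lambda>y. f1 y - f2 y) = 0"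
proof -
  have "ip (deriv f1) (\<lambda>y. deriv f1 y - deriv f2 y) + ip q1 (\<lambda>y. f1 y - f2 y) = 0 - 0"
  proof (rule ibp_L2)
    show "(q1 has_integral (deriv f1 y - deriv f1 x)) {x..y}" if "0 < x" "x \<le> y" for x y
      using prof_FTC2[OF p1 that] .
    show "((\<lambda>y. deriv f1 y - deriv f2 y) has_integral ((f1 y - f2 y) - (f1 x - f2 x))) {x..y}" if "0 < x" "x \<le> y" for x y
      using has_integral_diff[OF prof_FTC[OF p1 that] prof_FTC[OF p2 that]] by (simp add: algebra_simps)
    show "L2_pos (deriv f1)" "L2_pos q1" using prof_L2[OF p1] by auto
    show "L2_pos (\<lambda>y. f1 y - f2 y)" "L2_pos (\<lambda>y. deriv f1 y - deriv f2 y)"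
      using prof_L2[OF p1] prof_L2[OF p2] by (auto intro: L2_diff)
    show "((\<lambda>y. deriv f1 y * (f1 y - f2 y)) \<longlongrightarrow> 0) (at_right 0)"
      using tendsto_mult[OF prof_lims(3)[OF p1] tendsto_diff[OF prof_lims(1)[OF p1] prof_lims(1)[OF p2]]] by simp
    show "((\<lambda>y. deriv f1 y * (f1 y - f2 y)) \<longlongrightarrow> 0) at_top"
      using tendsto_mult[OF prof_ptop[OF p1] tendsto_diff[OF prof_lims(2)[OF p1] prof_lims(2)[OF p2]]] by simp
  qed
  then show ?thesis by simp
qed

lemma energy_step:
  assumes p1: "prof f1 q1 l1" and p2: "prof f2 q2 l2"
  shows "H1_norm_sq f1 - H1_norm_sq f2 \<le> 2 * ip (\<lambda>y. f1 y - f2 y) (\<lambda>y. f1 y - q1 y)"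
proof -
  have L1: "L2_pos f1" "L2_pos (deriv f1)" "L2_pos q1" using prof_L2[OF p1] by auto
  have L2: "L2_pos f2" "L2_pos (deriv f2)" using prof_L2[OF p2] by auto
  have sq: "integrable M0 (\<lambda>y. (F y)\<^sup>2)" if "L2_pos F" for F using that by (simp add: L2_pos_iff)
  have ipf: "integrable M0 (\<lambda>y. F y * G y)" if "L2_pos F" "L2_pos G" for F G using L2_mult[OF that] .
  have key: "L2_norm_sq F1 - L2_norm_sq F2 \<le> 2 * ip (\<lambda>y. F1 y - F2 y) F1" if "L2_pos F1" "L2_pos F2" for F1 F2
  proof -
    have "L2_norm_sq F1 - L2_norm_sq F2 = integral\<^sup>L M0 (\<lambda>y. (F1 y)\<^sup>2 - (F2 y)\<^sup>2)"
      using sq[OF that(1)] sq[OF that(2)] by (simp add: L2_norm_sq_M0)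
    also have "\<dots> \<le> integral\<^sup>L M0 (\<lambda>y. 2 * ((F1 y - F2 y) * F1 y))"
    proof (rule integral_mono)
      show "integrable M0 (\<lambda>y. (F1 y)\<^sup>2 - (F2 y)\<^sup>2)" using sq[OF that(1)] sq[OF that(2)] by simp
      show "integrable M0 (\<lambda>y. 2 * ((F1 y - F2 y) * F1 y))" using ipf[OF L2_diff[OF that] that(1)] by simp
      fix y
      have "0 \<le> (F1 y - F2 y)\<^sup>2" by simp
      then show "(F1 y)\<^sup>2 - (F2 y)\<^sup>2 \<le> 2 * ((F1 y - F2 y) * F1 y)" by (simp add: power2_eq_square algebra_simps)
    qed
    also have "\<dots> = 2 * ip (\<lambda>y. F1 y - F2 y) F1" by simp
    finally show ?thesis .
  qed
  have k1: "L2_norm_sq f1 - L2_norm_sq f2 \<le> 2 * ip (\<lambda>y. f1 y - f2 y) f1" by (rule key[OF L1(1) L2(1)])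
  have k2: "L2_norm_sq (deriv f1) - L2_norm_sq (deriv f2) \<le> 2 * ip (\<lambda>y. deriv f1 y - deriv f2 y) (deriv f1)"
    by (rule key[OF L1(2) L2(2)])
  have "ip (\<lambda>y. deriv f1 y - deriv f2 y) (deriv f1) = - ip q1 (\<lambda>y. f1 y - f2 y)"
    using T_ident[OF p1 p2] ip_commute[of "\<lambda>y. deriv f1 y - deriv f2 y" "deriv f1"] by simp
  also have "ip q1 (\<lambda>y. f1 y - f2 y) = ip (\<lambda>y. f1 y - f2 y) q1" by (rule ip_commute)
  finally have k3: "ip (\<lambda>y. deriv f1 y - deriv f2 y) (deriv f1) = - ip (\<lambda>y. f1 y - f2 y) q1" .
  have split: "ip (\<lambda>y. f1 y - f2 y) (\<lambda>y. f1 y - q1 y) = ip (\<lambda>y. f1 y - f2 y) f1 - ip (\<lambda>y. f1 y - f2 y) q1"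
  proof -
    have "ip (\<lambda>y. f1 y - f2 y) (\<lambda>y. f1 y - q1 y) = integral\<^sup>L M0 (\<lambda>y. (f1 y - f2 y) * f1 y - (f1 y - f2 y) * q1 y)"
      by (simp add: algebra_simps)
    also have "\<dots> = ip (\<lambda>y. f1 y - f2 y) f1 - ip (\<lambda>y. f1 y - f2 y) q1"
      by (rule Bochner_Integration.integral_diff) (intro ipf L2_diff L1 L2)+
    finally show ?thesis .
  qed
  show ?thesis using k1 k2 k3 split unfolding H1_norm_sq_def by linarith
qed



lemma L2_inner_tendsto:
  assumes ev: "eventually (\<lambda>s. L2_pos (w s)) F" and v: "L2_pos v" and z: "L2_pos z"
    and lim: "((\<lambda>s. L2_norm_sq (\<lambda>y. w s y - v y)) \<longlongrightarrow> 0) F"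
  shows "((\<lambda>s. ip (w s) z) \<longlongrightarrow> ip v z) F"
proof -
  have "((\<lambda>s. sqrt (L2_norm_sq (\<lambda>y. w s y - v y)) * sqrt (L2_norm_sq z)) \<longlongrightarrow> sqrt 0 * sqrt (L2_norm_sq z)) F"
    by (intro tendsto_intros lim)
  then have g0: "((\<lambda>s. sqrt (L2_norm_sq (\<lambda>y. w s y - v y)) * sqrt (L2_norm_sq z)) \<longlongrightarrow> 0) F" by simp
  have "eventually (\<lambda>s. norm (ip (w s) z - ip v z) \<le> sqrt (L2_norm_sq (\<lambda>y. w s y - v y)) * sqrt (L2_norm_sq z)) F"
    using ev
  proof eventually_elim
    case (elim s)
    have "ip (w s) z - ip v z = ip (\<lambda>y. w s y - v y) z"
      using L2_mult[OF elim z] L2_mult[OF v z] by (simp add: algebra_simps)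
    also have "\<bar>\<dots>\<bar> \<le> sqrt (L2_norm_sq (\<lambda>y. w s y - v y)) * sqrt (L2_norm_sq z)"
      by (rule L2_CS[OF L2_diff[OF elim v] z])
    finally show ?case by simp
  qed
  from Lim_null_comparison[OF this g0] show ?thesis by (simp add: Lim_null[symmetric])
qed

lemma L2_norm_tendsto:
  assumes ev: "eventually (\<lambda>s. L2_pos (w s)) F" and v: "L2_pos v"
    and lim: "((\<lambda>s. L2_norm_sq (\<lambda>y. w s y - v y)) \<longlongrightarrow> 0) F"
  shows "((\<lambda>s. L2_norm_sq (w s)) \<longlongrightarrow> L2_norm_sq v) F"
proof -
  have ev2: "eventually (\<lambda>s. L2_pos (\<lambda>y. w s y - v y)) F" using ev by eventually_elim (rule L2_diff[OF _ v])
  have i0: "((\<lambda>s. ip (\<lambda>y. w s y - v y) v) \<longlongrightarrow> ip (\<lambda>y. 0) v) F"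
    by (rule L2_inner_tendsto[OF ev2 L2_zero v]) (use lim in simp)
  have eq: "eventually (\<lambda>s. L2_norm_sq (\<lambda>y. w s y - v y) + 2 * ip (\<lambda>y. w s y - v y) v + L2_norm_sq v = L2_norm_sq (w s)) F"
    using ev
  proof eventually_elim
    case (elim s)
    have d: "L2_pos (\<lambda>y. w s y - v y)" using L2_diff[OF elim v] .
    have sq: "integrable M0 (\<lambda>y. (F y)\<^sup>2)" if "L2_pos F" for F using that by (simp add: L2_pos_iff)
    have "L2_norm_sq (\<lambda>y. w s y - v y) + 2 * ip (\<lambda>y. w s y - v y) v + L2_norm_sq v
       = integral\<^sup>L M0 (\<lambda>y. (w s y - v y)\<^sup>2 + 2 * ((w s y - v y) * v y) + (v y)\<^sup>2)"
      using sq[OF d] sq[OF v] L2_mult[OF d v] by (simp add: L2_norm_sq_M0)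
    also have "\<dots> = L2_norm_sq (w s)" unfolding L2_norm_sq_M0
      by (rule Bochner_Integration.integral_cong) (auto simp: power2_eq_square algebra_simps)
    finally show ?case .
  qed
  have "((\<lambda>s. L2_norm_sq (\<lambda>y. w s y - v y) + 2 * ip (\<lambda>y. w s y - v y) v + L2_norm_sq v) \<longlongrightarrow> 0 + 2 * 0 + L2_norm_sq v) F"
    by (intro tendsto_intros lim) (use i0 in simp)
  then show ?thesis using tendsto_cong[OF eq] by simp
qed

lemma deriv_diff':
  fixes f g :: "real \<Rightarrow> real"
  assumes "f differentiable at x" "g differentiable at x"
  shows "deriv (\<lambda>w. f w - g w) x = deriv f x - deriv g x"
proof -
  have "(f has_real_derivative deriv f x) (at x)" "(g has_real_derivative deriv g x) (at x)"
    using assms by (auto simp: DERIV_deriv_iff_real_differentiable)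
  from DERIV_diff[OF this] show ?thesis by (rule DERIV_imp_deriv)
qed

lemma H2_parts: assumes "H2_pos f" shows "\<And>y. y > 0 \<Longrightarrow> f differentiable at y" "L2_pos f" "L2_pos (deriv f)"
  using assms unfolding H2_pos_def by auto

lemma sol_prof:
  assumes s: "bvp_solution \<gamma> \<sigma> u u0" and t: "t > 0" and l: "(deriv (u t) \<longlongrightarrow> l) (at_right 0)"
  shows "\<exists>q. prof (u t) q l"
proof -
  have H: "H2_pos (u t)" using s t unfolding bvp_solution_def by auto
  then obtain f2 where f2: "L2_pos f2" "\<forall>a b. 0 < a \<longrightarrow> a \<le> b \<longrightarrow> (f2 has_integral (deriv (u t) b - deriv (u t) a)) {a..b}"
    unfolding H2_pos_def by blast
  have "prof (u t) f2 l" unfolding prof_def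
    using H2_parts[OF H] f2 l s t unfolding bvp_solution_def
    by (auto simp: DERIV_deriv_iff_real_differentiable)
  then show ?thesis by blast
qed

lemma sol_init: assumes s: "bvp_solution \<gamma> \<sigma> u u0" shows "H1_norm_sq u0 = H1_norm_sq (u 0)"
proof -
  have eq: "u 0 y = u0 y" if "y > 0" for y using s that unfolding bvp_solution_def by auto
  have d: "deriv u0 y = deriv (u 0) y" if "y > 0" for y
  proof (rule deriv_cong_ev)
    have "eventually (\<lambda>x. x \<in> {0<..}) (nhds y)" using that by (intro eventually_nhds_in_open) auto
    then show "\<forall>\<^sub>F x in nhds y. u0 x = u 0 x" by eventually_elim (simp add: eq)
  qed simp
  show ?thesis unfolding H1_norm_sq_def
    using L2_norm_sq_cong[of u0 "u 0"] L2_norm_sq_cong[of "deriv u0" "deriv (u 0)"] eq d by simp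
qed

lemma ev_within_nonneg: "eventually (\<lambda>s. s \<in> {0..}) (at t within {0..})"
  by (simp add: eventually_at_filter)

lemma sol_H1_cont:
  assumes s: "bvp_solution \<gamma> \<sigma> u u0" and t: "t \<ge> 0"
  shows "((\<lambda>s. H1_norm_sq (u s)) \<longlongrightarrow> H1_norm_sq (u t)) (at t within {0..})"
proof -
  let ?F = "at t within {0..}"
  have H: "\<And>s. s \<ge> 0 \<Longrightarrow> H2_pos (u s)" using s unfolding bvp_solution_def by auto
  have lim: "((\<lambda>s. H2_norm_sq (\<lambda>y. u s y - u t y)) \<longlongrightarrow> 0) ?F" using s t unfolding bvp_solution_def by auto
  have nn: "\<And>g. 0 \<le> L2_norm_sq g" by (rule L2_norm_sq_nonneg)
  have l1: "((\<lambda>s. L2_norm_sq (\<lambda>y. u s y - u t y)) \<longlongrightarrow> 0) ?F"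
    by (rule tendsto_sandwich[OF _ _ tendsto_const lim]) (auto simp: H2_norm_sq_def intro!: always_eventually add_nonneg_nonneg nn)
  have l2': "((\<lambda>s. L2_norm_sq (deriv (\<lambda>y. u s y - u t y))) \<longlongrightarrow> 0) ?F"
    by (rule tendsto_sandwich[OF _ _ tendsto_const lim]) (auto simp: H2_norm_sq_def intro!: always_eventually add_nonneg_nonneg nn)
  have ev: "eventually (\<lambda>s. L2_norm_sq (deriv (\<lambda>y. u s y - u t y)) = L2_norm_sq (\<lambda>y. deriv (u s) y - deriv (u t) y)) ?F"
    using ev_within_nonneg
  proof eventually_elim
    case (elim s)
    show ?case
      by (rule L2_norm_sq_cong, rule deriv_diff') (use H2_parts(1)[OF H] elim t in auto)
  qed
  have l2: "((\<lambda>s. L2_norm_sq (\<lambda>y. deriv (u s) y - deriv (u t) y)) \<longlongrightarrow> 0) ?F"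
    using tendsto_cong[OF ev] l2' by simp
  have "eventually (\<lambda>s. L2_pos (u s) \<and> L2_pos (deriv (u s))) ?F"
    using ev_within_nonneg[of t] by eventually_elim (use H2_parts(2,3)[OF H] in auto)
  then have evL: "eventually (\<lambda>s. L2_pos (u s)) ?F" "eventually (\<lambda>s. L2_pos (deriv (u s))) ?F"
    by (auto elim: eventually_mono)
  have "((\<lambda>s. L2_norm_sq (u s) + L2_norm_sq (deriv (u s))) \<longlongrightarrow> L2_norm_sq (u t) + L2_norm_sq (deriv (u t))) ?F"
    by (intro tendsto_add L2_norm_tendsto[OF evL(1) _ l1] L2_norm_tendsto[OF evL(2) _ l2] H2_parts[OF H[OF t]])
  then show ?thesis unfolding H1_norm_sq_def .
qed

lemma ev_left_pos: "t > 0 \<Longrightarrow> eventually (\<lambda>s. 0 < s \<and> s < t) (at_left (t::real))"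
  unfolding eventually_at_left_field by (intro exI[of _ 0]) auto

lemma sol_dini:
  assumes s: "bvp_solution \<gamma> \<sigma> u u0" and t: "t > 0"
    and lall: "\<forall>s>0. \<exists>l. (deriv (u s) \<longlongrightarrow> l) (at_right 0)"
    and pt: "prof (u t) q l"
  shows "\<exists>G. (G \<longlongrightarrow> 2 * (- L2_norm_sq (deriv (u t)) - L2_norm_sq q + (1 + \<sigma> * \<gamma> t) * l\<^sup>2 / 2 + \<gamma> t * l)) (at_left t)
     \<and> eventually (\<lambda>s. H1_norm_sq (u t) - H1_norm_sq (u s) \<le> (t - s) * G s) (at_left t)"
proof -
  have H: "\<And>s. s \<ge> 0 \<Longrightarrow> H2_pos (u s)" using s unfolding bvp_solution_def by auto
  obtain v where v: "L2_pos v" "((\<lambda>s. L2_norm_sq (\<lambda>y. (u s y - u t y) / (s - t) - v y)) \<longlongrightarrow> 0) (at t)"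
    "AE y in lborel. y > 0 \<longrightarrow> v y = (1 + \<sigma> * \<gamma> t) * deriv (u t) y + deriv (deriv (u t)) y + \<gamma> t * exp (- y)"
    using s t unfolding bvp_solution_def by blast
  define z where "z y = u t y - q y" for y
  have zL: "L2_pos z" unfolding z_def using prof_L2[OF pt] by (auto intro: L2_diff)
  define G where "G s = 2 * ip (\<lambda>y. (u s y - u t y) / (s - t)) z" for s
  have D: "ip v z = - L2_norm_sq (deriv (u t)) - L2_norm_sq q + (1 + \<sigma> * \<gamma> t) * l\<^sup>2 / 2 + \<gamma> t * l"
    unfolding z_def by (rule Dform[OF pt v(1) v(3)])
  have evL: "eventually (\<lambda>s. L2_pos (\<lambda>y. (u s y - u t y) / (s - t))) (at_left t)"
    using ev_left_pos[OF t]
    by eventually_elim (intro L2_div L2_diff H2_parts(2) H, auto simp: less_imp_le t)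
  have lim: "((\<lambda>s. L2_norm_sq (\<lambda>y. (u s y - u t y) / (s - t) - v y)) \<longlongrightarrow> 0) (at_left t)"
    by (rule tendsto_within_subset[OF v(2)]) simp
  have "(G \<longlongrightarrow> 2 * ip v z) (at_left t)"
    unfolding G_def by (intro tendsto_mult tendsto_const L2_inner_tendsto[OF evL v(1) zL lim])
  moreover have "eventually (\<lambda>s. H1_norm_sq (u t) - H1_norm_sq (u s) \<le> (t - s) * G s) (at_left t)"
    using ev_left_pos[OF t]
  proof eventually_elim
    case (elim s)
    obtain ls where ls: "(deriv (u s) \<longlongrightarrow> ls) (at_right 0)" using lall elim by blast
    obtain qs where ps: "prof (u s) qs ls" using sol_prof[OF s _ ls] elim by blast
    have "H1_norm_sq (u t) - H1_norm_sq (u s) \<le> 2 * ip (\<lambda>y. u t y - u s y) z"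
      unfolding z_def by (rule energy_step[OF pt ps])
    also have "ip (\<lambda>y. u t y - u s y) z = integral\<^sup>L M0 (\<lambda>y. (t - s) * ((u s y - u t y) / (s - t) * z y))"
      by (rule Bochner_Integration.integral_cong) (use elim in \<open>auto simp: field_simps\<close>)
    also have "\<dots> = (t - s) * ip (\<lambda>y. (u s y - u t y) / (s - t)) z" by (rule integral_mult_right_zero)
    finally show ?case unfolding G_def by (metis mult.left_commute)
  qed
  ultimately show ?thesis unfolding D by blast
qed

lemma left_dini_mono:
  fixes E :: "real \<Rightarrow> real"
  assumes T: "T > 0" and cont: "continuous_on {0..T} E"
    and dini: "\<And>t e. 0 < t \<Longrightarrow> t \<le> T \<Longrightarrow> e > 0 \<Longrightarrow> eventually (\<lambda>s. E t - E s \<le> e * (t - s)) (at_left t)"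
  shows "E T \<le> E 0"
proof (rule ccontr)
  assume "\<not> E T \<le> E 0"
  then have gt: "E T > E 0" by simp
  define e where "e = (E T - E 0) / (2 * T)"
  have e: "e > 0" using gt T by (simp add: e_def)
  define \<phi> where "\<phi> t = E t - e * t" for t
  have "continuous_on {0..T} \<phi>" unfolding \<phi>_def by (intro continuous_intros cont)
  then obtain c where c: "c \<in> {0..T}" "\<And>y. y \<in> {0..T} \<Longrightarrow> \<phi> y \<le> \<phi> c"
    using continuous_attains_sup[of "{0..T}" \<phi>] T by auto
  have "\<phi> T > \<phi> 0" using gt T by (simp add: \<phi>_def e_def field_simps)
  then have "\<phi> c > \<phi> 0" using c(2)[of T] T by auto
  then have cpos: "c > 0" using c(1) by (cases "c = 0") auto
  have cT: "c \<le> T" using c(1) by simp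
  have e2: "e / 2 > 0" using e by simp
  have "eventually (\<lambda>s. E c - E s \<le> (e/2) * (c - s)) (at_left c)"
    by (rule dini[OF cpos cT e2])
  then obtain b where b: "b < c" "\<And>y. b < y \<Longrightarrow> y < c \<Longrightarrow> E c - E y \<le> (e/2) * (c - y)"
    unfolding eventually_at_left_field by auto
  define s where "s = (max b 0 + c) / 2"
  have s: "b < s" "s < c" "0 \<le> s" using b(1) cpos by (auto simp: s_def)
  have h1: "E c - E s \<le> (e/2) * (c - s)" using b(2) s by auto
  have pos: "e * (c - s) > 0" using s e by simp
  have h2: "(e/2) * (c - s) = (e * (c - s)) / 2" by simp
  have h3: "\<phi> s - \<phi> c = (E s - E c) + e * (c - s)" by (simp add: \<phi>_def algebra_simps)
  have "\<phi> s > \<phi> c" using h1 h2 h3 pos by linarith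
  moreover have "s \<in> {0..T}" using s c(1) by auto
  ultimately show False using c(2) by fastforce
qed

theorem lemma5p2:
  fixes \<gamma> :: "real \<Rightarrow> real" and up um :: "real \<Rightarrow> real \<Rightarrow> real" and u0p u0m :: "real \<Rightarrow> real"
  assumes "continuous_on {0<..} \<gamma>"
    and "bvp_solution \<gamma> 1 up u0p"
    and "bvp_solution \<gamma> (-1) um u0m"
    and "\<forall>t>0. \<exists>l. (deriv (up t) \<longlongrightarrow> l) (at_right 0) \<and> (deriv (um t) \<longlongrightarrow> - l) (at_right 0)"
  shows "\<forall>t>0. H1_norm_sq (up t) + H1_norm_sq (um t) \<le> H1_norm_sq u0p + H1_norm_sq u0m"
proof (intro allI impI)
  fix T :: real assume T: "T > 0"
  note sp = assms(2) and sm = assms(3)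
  define E where "E t = H1_norm_sq (up t) + H1_norm_sq (um t)" for t
  have lallp: "\<forall>s>0. \<exists>l. (deriv (up s) \<longlongrightarrow> l) (at_right 0)" using assms(4) by blast
  have lallm: "\<forall>s>0. \<exists>l. (deriv (um s) \<longlongrightarrow> l) (at_right 0)" using assms(4) by blast
  have cont: "continuous_on {0..T} E"
    unfolding continuous_on_def
  proof
    fix t assume "t \<in> {0..T}"
    then have t: "t \<ge> 0" by simp
    have "(E \<longlongrightarrow> E t) (at t within {0..})"
      unfolding E_def by (intro tendsto_add sol_H1_cont[OF sp t] sol_H1_cont[OF sm t])
    then show "(E \<longlongrightarrow> E t) (at t within {0..T})" by (rule tendsto_within_subset) auto
  qed
  have dini: "eventually (\<lambda>s. E t - E s \<le> e * (t - s)) (at_left t)" if t: "0 < t" and e: "e > 0" for t e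
  proof -
    obtain l where l: "(deriv (up t) \<longlongrightarrow> l) (at_right 0)" "(deriv (um t) \<longlongrightarrow> - l) (at_right 0)"
      using assms(4) t by blast
    obtain qp where pp: "prof (up t) qp l" using sol_prof[OF sp t l(1)] by blast
    obtain qm where pm: "prof (um t) qm (- l)" using sol_prof[OF sm t l(2)] by blast
    obtain Gp where Gp: "(Gp \<longlongrightarrow> 2 * (- L2_norm_sq (deriv (up t)) - L2_norm_sq qp + (1 + 1 * \<gamma> t) * l\<^sup>2 / 2 + \<gamma> t * l)) (at_left t)"
      "eventually (\<lambda>s. H1_norm_sq (up t) - H1_norm_sq (up s) \<le> (t - s) * Gp s) (at_left t)"
      using sol_dini[OF sp t lallp pp] by blast
    obtain Gm where Gm: "(Gm \<longlongrightarrow> 2 * (- L2_norm_sq (deriv (um t)) - L2_norm_sq qm + (1 + -1 * \<gamma> t) * (- l)\<^sup>2 / 2 + \<gamma> t * (- l))) (at_left t)"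
      "eventually (\<lambda>s. H1_norm_sq (um t) - H1_norm_sq (um s) \<le> (t - s) * Gm s) (at_left t)"
      using sol_dini[OF sm t lallm pm] by blast
    have bp: "l\<^sup>2 \<le> L2_norm_sq (deriv (up t)) + L2_norm_sq qp" by (rule bdry_bound[OF pp])
    have bm: "(- l)\<^sup>2 \<le> L2_norm_sq (deriv (um t)) + L2_norm_sq qm" by (rule bdry_bound[OF pm])
    define K where "K = 2 * (- L2_norm_sq (deriv (up t)) - L2_norm_sq qp + (1 + 1 * \<gamma> t) * l\<^sup>2 / 2 + \<gamma> t * l)
       + 2 * (- L2_norm_sq (deriv (um t)) - L2_norm_sq qm + (1 + -1 * \<gamma> t) * (- l)\<^sup>2 / 2 + \<gamma> t * (- l))"
    have K: "K \<le> 0"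
    proof -
      have "K = 2 * (l\<^sup>2 - (L2_norm_sq (deriv (up t)) + L2_norm_sq qp) - (L2_norm_sq (deriv (um t)) + L2_norm_sq qm))"
        by (simp add: K_def power2_eq_square field_simps)
      moreover have "l\<^sup>2 \<ge> 0" by simp
      moreover have "l\<^sup>2 \<le> L2_norm_sq (deriv (um t)) + L2_norm_sq qm" using bm by simp
      moreover have "l\<^sup>2 - (L2_norm_sq (deriv (up t)) + L2_norm_sq qp) - (L2_norm_sq (deriv (um t)) + L2_norm_sq qm) \<le> 0"
        using bp calculation(2,3) by linarith
      ultimately show ?thesis by simp
    qed
    have "((\<lambda>s. Gp s + Gm s) \<longlongrightarrow> K) (at_left t)" unfolding K_def by (rule tendsto_add[OF Gp(1) Gm(1)])
    moreover have "K < e" using K e by simp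
    ultimately have evG: "eventually (\<lambda>s. Gp s + Gm s < e) (at_left t)"
      by (rule order_tendstoD(2))
    show ?thesis using evG Gp(2) Gm(2) ev_left_pos[OF t]
    proof eventually_elim
      case (elim s)
      have "E t - E s \<le> (t - s) * Gp s + (t - s) * Gm s" using elim by (simp add: E_def)
      also have "\<dots> = (t - s) * (Gp s + Gm s)" by (simp add: algebra_simps)
      also have "\<dots> \<le> (t - s) * e" using elim by (intro mult_left_mono) auto
      finally show ?case by (simp add: mult.commute)
    qed
  qed
  have "E T \<le> E 0" by (rule left_dini_mono[OF T cont]) (use dini in auto)
  also have "E 0 = H1_norm_sq u0p + H1_norm_sq u0m" unfolding E_def using sol_init[OF sp] sol_init[OF sm] by simp
  finally show "H1_norm_sq (up T) + H1_norm_sq (um T) \<le> H1_norm_sq u0p + H1_norm_sq u0m" unfolding E_def .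
qed

end
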